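(* Fix an integer $d\geq 2$ and $k\in\{2,\ldots,d\}$, and let $X\subseteq S^{d-1}\subseteq\mathbb{R}^d$ be a set of unit vectors with $|X|=d+k$ such that $\max\{\langle x,y\rangle:x,y\in X,\ x\neq y\}=0$. Then there exist a possibly empty subset $X_0\subseteq X$ and a partition $X_1\sqcup\cdots\sqcup X_l=X\setminus X_0$ with $l\geq k$ such that (i) $|X_0|=\dim\operatorname{span}X_0$, (ii) $|X_i|=\dim\operatorname{span}X_i+1$ for each $i\in\{1,\ldots,l\}$, and (iii) $\operatorname{span}X_i\perp\operatorname{span}X_j$ whenever $i\neq j$ (with $i,j\in\{0,1,\ldots,l\}$).
   Context: For any $X\subseteq S^{d-1}$ with $|X|\geq d+2$ one always has $\max\{\langle x,y\rangle:x\neq y\}\geq 0$ (Rankin's orthoplex bound); the hypothesis says $X$ achieves equality in this bound. *)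

theory Defs
  imports "HOL-Analysis.Analysis"
begin

end

theory Submission
  imports Defs
begin

definition nonpos_pw :: "('a::real_inner) set \<Rightarrow> bool" where
  "nonpos_pw T \<longleftrightarrow> (\<forall>x\<in>T. \<forall>y\<in>T. x \<noteq> y \<longrightarrow> x \<bullet> y \<le> 0)"

lemma L1:
  fixes T :: "('a::real_inner) set"
  assumes np: "nonpos_pw T" and t: "finite t" "t \<subseteq> T"
    and sum0: "(\<Sum>v\<in>t. u v *\<^sub>R v) = 0" and nz: "\<exists>v\<in>t. u v \<noteq> 0"
  shows "\<exists>A. A \<subseteq> t \<and> A \<noteq> {} \<and> dependent A \<and> (\<forall>a\<in>A. \<forall>y\<in>T - A. a \<bullet> y = 0)"
proof -
  have main: "\<exists>A. A \<subseteq> t \<and> A \<noteq> {} \<and> dependent A \<and> (\<forall>a\<in>A. \<forall>y\<in>T - A. a \<bullet> y = 0)"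
    if s0: "(\<Sum>v\<in>t. c v *\<^sub>R v) = 0" and pos: "\<exists>v\<in>t. c v > 0" for c
  proof -
    define A where "A = {v\<in>t. c v > 0}"
    define B where "B = {v\<in>t. c v < 0}"
    define w where "w = (\<Sum>a\<in>A. c a *\<^sub>R a)"
    have fA: "finite A" and fB: "finite B" unfolding A_def B_def by (rule finite_subset[OF _ t(1)], blast)+
    have split: "(\<Sum>v\<in>t. c v *\<^sub>R v) = (\<Sum>a\<in>A. c a *\<^sub>R a) + (\<Sum>b\<in>B. c b *\<^sub>R b)"
    proof -
      have "(\<Sum>v\<in>t. c v *\<^sub>R v) = (\<Sum>v\<in>A \<union> B. c v *\<^sub>R v)"
        using fA fB by (intro sum.mono_neutral_right) (auto simp: t A_def B_def)
      also have "\<dots> = (\<Sum>a\<in>A. c a *\<^sub>R a) + (\<Sum>b\<in>B. c b *\<^sub>R b)"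
        by (rule sum.union_disjoint[OF fA fB]) (auto simp: A_def B_def)
      finally show ?thesis .
    qed
    have wB: "w = (\<Sum>b\<in>B. (- c b) *\<^sub>R b)"
      using s0 split unfolding w_def by (simp add: sum_negf eq_neg_iff_add_eq_0)
    have "w \<bullet> w = (\<Sum>a\<in>A. c a *\<^sub>R a) \<bullet> (\<Sum>b\<in>B. (- c b) *\<^sub>R b)"
      using wB by (simp add: w_def)
    also have "\<dots> = (\<Sum>a\<in>A. \<Sum>b\<in>B. (c a * (- c b)) * (a \<bullet> b))"
      by (simp add: inner_sum_left inner_sum_right sum_distrib_left mult.assoc sum_negf mult.left_commute sum.swap[of _ B A])
    also have "\<dots> \<le> 0"
    proof (rule sum_nonpos, rule sum_nonpos)
      fix a b assume a: "a \<in> A" and b: "b \<in> B"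
      have "a \<noteq> b" using a b by (auto simp: A_def B_def)
      then have "a \<bullet> b \<le> 0" using np a b t by (auto simp: nonpos_pw_def A_def B_def)
      moreover have "c a * (- c b) \<ge> 0" using a b by (auto simp: A_def B_def mult_pos_neg less_imp_le)
      ultimately show "c a * (- c b) * (a \<bullet> b) \<le> 0" by (metis mult_nonneg_nonpos)
    qed
    finally have w0: "w = 0" by (metis inner_gt_zero_iff not_le)
    show ?thesis
    proof (intro exI conjI)
      show "A \<subseteq> t" by (auto simp: A_def)
      show "A \<noteq> {}" using pos by (auto simp: A_def)
      show "dependent A"
        unfolding dependent_explicit using w0 pos fA
        by (auto simp: w_def A_def intro!: exI[of _ A] exI[of _ c])
      show "\<forall>a\<in>A. \<forall>y\<in>T - A. a \<bullet> y = 0"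
      proof (intro ballI)
        fix a y assume a: "a \<in> A" and y: "y \<in> T - A"
        have terms: "\<forall>x\<in>A. c x * (x \<bullet> y) \<le> 0"
        proof
          fix x assume x: "x \<in> A"
          have "x \<noteq> y" using x y by auto
          then have "x \<bullet> y \<le> 0" using np x y t by (auto simp: nonpos_pw_def A_def)
          moreover have "c x > 0" using x by (auto simp: A_def)
          ultimately show "c x * (x \<bullet> y) \<le> 0" by (simp add: mult_nonneg_nonpos less_imp_le)
        qed
        have "(\<Sum>x\<in>A. c x * (x \<bullet> y)) = w \<bullet> y"
          by (simp add: w_def inner_sum_left)
        then have "(\<Sum>x\<in>A. c x * (x \<bullet> y)) = 0" using w0 by simp
        then have "(\<Sum>x\<in>A. - (c x * (x \<bullet> y))) = 0" by (simp add: sum_negf)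
        then have "\<forall>x\<in>A. - (c x * (x \<bullet> y)) = 0"
          using sum_nonneg_eq_0_iff[OF fA, of "\<lambda>x. - (c x * (x \<bullet> y))"] terms by simp
        then have "\<forall>x\<in>A. c x * (x \<bullet> y) = 0" by simp
        then have "c a * (a \<bullet> y) = 0" using a by blast
        moreover have "c a > 0" using a by (auto simp: A_def)
        ultimately show "a \<bullet> y = 0" by simp
      qed
    qed
  qed
  obtain v where v: "v \<in> t" "u v \<noteq> 0" using nz by blast
  show ?thesis
  proof (cases "u v > 0")
    case True then show ?thesis using main[of u] sum0 v by blast
  next
    case False
    then have "(- u) v > 0" using v by simp
    moreover have "(\<Sum>x\<in>t. (- u) x *\<^sub>R x) = 0" using sum0 by (simp add: sum_negf)
    ultimately show ?thesis using main[of "- u"] v by blast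
  qed
qed

lemma orth_span:
  fixes A B :: "('a::real_inner) set"
  assumes "\<forall>a\<in>A. \<forall>b\<in>B. a \<bullet> b = 0" "u \<in> span A" "v \<in> span B"
  shows "u \<bullet> v = 0"
proof -
  have "\<forall>a\<in>A. orthogonal a v"
  proof
    fix a assume a: "a \<in> A"
    show "orthogonal a v"
      by (rule orthogonal_to_span[OF assms(3)]) (use a assms(1) in \<open>auto simp: orthogonal_def\<close>)
  qed
  then have "orthogonal v u"
    by (intro orthogonal_to_span[OF assms(2)]) (auto simp: orthogonal_commute)
  then show ?thesis by (simp add: orthogonal_def inner_commute)
qed

lemma dim_union_orth:
  fixes A B :: "('a::euclidean_space) set"
  assumes "\<forall>a\<in>A. \<forall>b\<in>B. a \<bullet> b = 0"
  shows "dim (A \<union> B) = dim A + dim B"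
proof -
  have int: "span A \<inter> span B = {0}"
  proof
    show "span A \<inter> span B \<subseteq> {0}"
    proof
      fix u assume "u \<in> span A \<inter> span B"
      then have "u \<bullet> u = 0" using orth_span[OF assms] by blast
      then show "u \<in> {0}" by simp
    qed
  qed (auto simp: span_zero)
  have "dim (A \<union> B) = dim (span (A \<union> B))" by simp
  also have "\<dots> = dim {x + y |x y. x \<in> span A \<and> y \<in> span B}" by (simp add: span_Un)
  also have "\<dots> = dim (span A) + dim (span B)"
    using dim_sums_Int[OF subspace_span subspace_span, of A B] int by simp
  finally show ?thesis by simp
qed

lemma nonpos_pw_subset: "nonpos_pw Y \<Longrightarrow> S \<subseteq> Y \<Longrightarrow> nonpos_pw S"
  unfolding nonpos_pw_def by blast

lemma comp_card:
  fixes S Y :: "('a::euclidean_space) set"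
  assumes fin: "finite Y" and np: "nonpos_pw Y" and SY: "S \<subseteq> Y" and dep: "dependent S"
    and orth: "\<forall>a\<in>S. \<forall>b\<in>Y - S. a \<bullet> b = 0"
    and minimal: "\<And>S'. S' \<subseteq> Y \<Longrightarrow> S' \<noteq> {} \<Longrightarrow> dependent S' \<Longrightarrow>
                    (\<forall>a\<in>S'. \<forall>b\<in>Y - S'. a \<bullet> b = 0) \<Longrightarrow> card S \<le> card S'"
  shows "card S = dim S + 1"
proof -
  have finS: "finite S" using fin SY finite_subset by blast
  have "S \<noteq> {}" using dep independent_empty by auto
  then obtain x where xS: "x \<in> S" by blast
  have ind: "independent (S - {x})"
  proof (rule ccontr)
    assume "\<not> independent (S - {x})"
    then obtain t u where t: "finite t" "t \<subseteq> S - {x}" "(\<Sum>v\<in>t. u v *\<^sub>R v) = 0" "\<exists>v\<in>t. u v \<noteq> 0"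
      unfolding dependent_explicit by blast
    have npS: "nonpos_pw S" using nonpos_pw_subset[OF np SY] .
    obtain A where A: "A \<subseteq> t" "A \<noteq> {}" "dependent A" "\<forall>a\<in>A. \<forall>y\<in>S - A. a \<bullet> y = 0"
      using L1[OF npS t(1) _ t(3) t(4)] t(2) by blast
    have AS: "A \<subseteq> S - {x}" using A(1) t(2) by blast
    have "\<forall>a\<in>A. \<forall>b\<in>Y - A. a \<bullet> b = 0"
    proof (intro ballI)
      fix a b assume a: "a \<in> A" and b: "b \<in> Y - A"
      show "a \<bullet> b = 0"
      proof (cases "b \<in> S")
        case True then show ?thesis using A(4) a b by blast
      next
        case False then show ?thesis using orth a b AS by blast
      qed
    qed
    then have "card S \<le> card A" using minimal[of A] A AS SY by blast
    moreover have "card A \<le> card (S - {x})" using AS finS by (intro card_mono) auto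
    moreover have "card (S - {x}) < card S" by (rule card_Diff1_less[OF finS xS])
    ultimately show False by linarith
  qed
  have Seq: "S = insert x (S - {x})" using xS by blast
  have "independent (insert x (S - {x})) = (independent (S - {x}) \<and> x \<notin> span (S - {x}))"
    by (subst independent_insert) simp
  then have xspan: "x \<in> span (S - {x})"
    using dep ind unfolding insert_Diff[OF xS] by blast
  have "dim S = dim (span (insert x (S - {x})))" unfolding insert_Diff[OF xS] by simp
  also have "\<dots> = dim (span (S - {x}))" using span_redundant[OF xspan] by simp
  also have "\<dots> = card (S - {x})" using dim_eq_card_independent[OF ind] by simp
  also have "\<dots> = card S - 1" using xS finS by simp
  finally have "dim S = card S - 1" .
  moreover have "card S > 0" using xS finS card_gt_0_iff by blast
  ultimately show ?thesis by linarith
qed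

lemma L2:
  fixes Y :: "('a::euclidean_space) set"
  assumes "finite Y" "nonpos_pw Y"
  shows "\<exists>(P :: nat \<Rightarrow> 'a set) l. P 0 \<subseteq> Y \<and> (\<forall>i\<in>{1..l}. P i \<noteq> {} \<and> P i \<subseteq> Y) \<and>
     (\<forall>i\<in>{1..l}. \<forall>j\<in>{1..l}. i \<noteq> j \<longrightarrow> P i \<inter> P j = {}) \<and>
     (\<Union>i\<in>{1..l}. P i) = Y - P 0 \<and> independent (P 0) \<and>
     (\<forall>i\<in>{1..l}. card (P i) = dim (span (P i)) + 1) \<and>
     (\<forall>i\<in>{0..l}. \<forall>j\<in>{0..l}. i \<noteq> j \<longrightarrow> (\<forall>u\<in>span (P i). \<forall>v\<in>span (P j). u \<bullet> v = 0)) \<and>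
     card Y = dim Y + l"
  using assms
proof (induction "card Y" arbitrary: Y rule: less_induct)
  case less
  note fin = less.prems(1) and np = less.prems(2)
  show ?case
  proof (cases "independent Y")
    case True
    show ?thesis
      apply (rule exI[of _ "\<lambda>i. if i = 0 then Y else {}"], rule exI[of _ 0])
      using True dim_eq_card_independent[OF True] by auto
  next
    case False
    define Q where "Q = (\<lambda>S. S \<subseteq> Y \<and> S \<noteq> {} \<and> dependent S \<and> (\<forall>a\<in>S. \<forall>b\<in>Y - S. a \<bullet> b = 0))"
    have "Q Y" using False independent_empty unfolding Q_def by auto
    then obtain S where QS: "Q S" and minS: "\<And>S'. Q S' \<Longrightarrow> card S \<le> card S'"
      using ex_has_least_nat[of Q Y card] by blast
    have SY: "S \<subseteq> Y" and Sne: "S \<noteq> {}" and Sdep: "dependent S"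
      and Sorth: "\<forall>a\<in>S. \<forall>b\<in>Y - S. a \<bullet> b = 0" using QS unfolding Q_def by auto
    have cardS: "card S = dim S + 1"
      by (rule comp_card[OF fin np SY Sdep Sorth]) (use minS in \<open>auto simp: Q_def\<close>)
    define R where "R = Y - S"
    have finR: "finite R" using fin by (simp add: R_def)
    have npR: "nonpos_pw R" using nonpos_pw_subset[OF np] by (simp add: R_def)
    have finS: "finite S" using fin SY finite_subset by blast
    have "R \<subset> Y" using Sne SY unfolding R_def by blast
    then have "card R < card Y" by (rule psubset_card_mono[OF fin])
    from less.hyps[OF this finR npR] obtain P l where
      P0: "P 0 \<subseteq> R" and Pne: "\<forall>i\<in>{1..l}. P i \<noteq> {} \<and> P i \<subseteq> R"
      and Pdisj: "\<forall>i\<in>{1..l}. \<forall>j\<in>{1..l}. i \<noteq> j \<longrightarrow> P i \<inter> P j = {}"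
      and Pun: "(\<Union>i\<in>{1..l}. P i) = R - P 0" and Pind: "independent (P 0)"
      and Pcard: "\<forall>i\<in>{1..l}. card (P i) = dim (span (P i)) + 1"
      and Porth: "\<forall>i\<in>{0..l}. \<forall>j\<in>{0..l}. i \<noteq> j \<longrightarrow> (\<forall>u\<in>span (P i). \<forall>v\<in>span (P j). u \<bullet> v = 0)"
      and Pc: "card R = dim R + l" by (elim exE conjE) (rule that; assumption)
    define P' where "P' = P(Suc l := S)"
    have PR: "\<forall>i\<in>{0..l}. P i \<subseteq> R" 
    proof
      fix i assume "i \<in> {0..l}"
      then show "P i \<subseteq> R" using P0 Pne by (cases "i = 0") auto
    qed
    have orthSR: "\<forall>a\<in>S. \<forall>b\<in>R. a \<bullet> b = 0" using Sorth by (simp add: R_def)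
    have orth1: "\<forall>u\<in>span S. \<forall>v\<in>span (P i). u \<bullet> v = 0" if "i \<in> {0..l}" for i
    proof -
      have "\<forall>a\<in>S. \<forall>b\<in>P i. a \<bullet> b = 0" using orthSR PR that by blast
      then show ?thesis using orth_span by blast
    qed
    have YSR: "Y = S \<union> R" using SY by (auto simp: R_def)
    have dimY: "dim Y = dim S + dim R" unfolding YSR by (rule dim_union_orth[OF orthSR])
    have cardY: "card Y = card S + card R" unfolding YSR
      by (rule card_Un_disjoint[OF finS finR]) (auto simp: R_def)
    show ?thesis
    proof (rule exI[of _ P'], rule exI[of _ "Suc l"], intro conjI)
      show "P' 0 \<subseteq> Y" using P0 by (auto simp: P'_def R_def)
      show "\<forall>i\<in>{1..Suc l}. P' i \<noteq> {} \<and> P' i \<subseteq> Y"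
        using Pne Sne SY by (auto simp: P'_def R_def le_Suc_eq)
      show "\<forall>i\<in>{1..Suc l}. \<forall>j\<in>{1..Suc l}. i \<noteq> j \<longrightarrow> P' i \<inter> P' j = {}"
      proof (intro ballI impI)
        fix i j assume i: "i \<in> {1..Suc l}" and j: "j \<in> {1..Suc l}" and ij: "i \<noteq> j"
        show "P' i \<inter> P' j = {}"
        proof (cases "i = Suc l")
          case True
          then have "j \<in> {1..l}" using j ij by auto
          then have "P j \<subseteq> R" using Pne by blast
          then show ?thesis using True ij by (auto simp: P'_def R_def)
        next
          case False
          then have i': "i \<in> {1..l}" using i by auto
          then have PiR: "P i \<subseteq> R" using Pne by blast
          show ?thesis
          proof (cases "j = Suc l")
            case True
            then show ?thesis using PiR False by (auto simp: P'_def R_def)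
          next
            case False
            then have "j \<in> {1..l}" using j by auto
            then show ?thesis using Pdisj i' ij \<open>i \<noteq> Suc l\<close> False by (simp add: P'_def)
          qed
        qed
      qed
      show "(\<Union>i\<in>{1..Suc l}. P' i) = Y - P' 0"
      proof -
        have eq: "{1..Suc l} = insert (Suc l) {1..l}" by auto
        have eq2: "(\<Union>i\<in>{1..l}. P' i) = (\<Union>i\<in>{1..l}. P i)"
          by (rule SUP_cong) (auto simp: P'_def)
        have "(\<Union>i\<in>{1..Suc l}. P' i) = S \<union> (\<Union>i\<in>{1..l}. P i)"
          unfolding eq UN_insert eq2 by (simp add: P'_def)
        also have "\<dots> = Y - P 0" using Pun P0 SY by (auto simp: R_def)
        finally show ?thesis by (simp add: P'_def)
      qed
      show "independent (P' 0)" using Pind by (simp add: P'_def)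
      show "\<forall>i\<in>{1..Suc l}. card (P' i) = dim (span (P' i)) + 1"
        using Pcard cardS by (auto simp: P'_def le_Suc_eq)
      show "\<forall>i\<in>{0..Suc l}. \<forall>j\<in>{0..Suc l}. i \<noteq> j \<longrightarrow> (\<forall>u\<in>span (P' i). \<forall>v\<in>span (P' j). u \<bullet> v = 0)"
      proof (intro ballI impI)
        fix i j u v assume i: "i \<in> {0..Suc l}" and j: "j \<in> {0..Suc l}" and ij: "i \<noteq> j"
          and u: "u \<in> span (P' i)" and v: "v \<in> span (P' j)"
        show "u \<bullet> v = 0"
        proof (cases "i = Suc l")
          case True
          then have "j \<in> {0..l}" using j ij by auto
          have u': "u \<in> span S" using u True by (simp add: P'_def)
          have v': "v \<in> span (P j)" using v True ij by (simp add: P'_def)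
          show ?thesis using orth1 \<open>j \<in> {0..l}\<close> u' v' by blast
        next
          case False
          then have i': "i \<in> {0..l}" using i by auto
          show ?thesis
          proof (cases "j = Suc l")
            case True
            have u': "u \<in> span (P i)" using u False by (simp add: P'_def)
            have v': "v \<in> span S" using v True by (simp add: P'_def)
            have "v \<bullet> u = 0" using orth1[OF i'] u' v' by blast
            then show ?thesis by (simp add: inner_commute)
          next
            case False
            then have "j \<in> {0..l}" using j by auto
            have u': "u \<in> span (P i)" using u \<open>i \<noteq> Suc l\<close> by (simp add: P'_def)
            have v': "v \<in> span (P j)" using v False by (simp add: P'_def)
            show ?thesis using Porth i' \<open>j \<in> {0..l}\<close> ij u' v' by blast
          qed
        qed
      qed
      show "card Y = dim Y + Suc l" using cardY dimY cardS Pc by linarith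
    qed
  qed
qed

theorem theorem2p2:
  fixes X :: "(real ^ 'n) set" and k :: nat
  assumes "CARD('n) \<ge> 2"
    and "2 \<le> k" and "k \<le> CARD('n)"
    and "finite X" and "card X = CARD('n) + k"
    and "\<forall>x\<in>X. norm x = 1"
    and "Max {x \<bullet> y | x y. x \<in> X \<and> y \<in> X \<and> x \<noteq> y} = 0"
  shows "\<exists>(P :: nat \<Rightarrow> (real ^ 'n) set) l.
           l \<ge> k \<and>
           P 0 \<subseteq> X \<and>
           (\<forall>i\<in>{1..l}. P i \<noteq> {}) \<and>
           (\<forall>i\<in>{1..l}. \<forall>j\<in>{1..l}. i \<noteq> j \<longrightarrow> P i \<inter> P j = {}) \<and>
           (\<Union>i\<in>{1..l}. P i) = X - P 0 \<and>
           card (P 0) = dim (span (P 0)) \<and>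
           (\<forall>i\<in>{1..l}. card (P i) = dim (span (P i)) + 1) \<and>
           (\<forall>i\<in>{0..l}. \<forall>j\<in>{0..l}. i \<noteq> j \<longrightarrow>
              (\<forall>u\<in>span (P i). \<forall>v\<in>span (P j). u \<bullet> v = 0))"
proof -
  note fin = assms(4)
  have finM: "finite {x \<bullet> y | x y. x \<in> X \<and> y \<in> X \<and> x \<noteq> y}"
  proof (rule finite_subset)
    show "{x \<bullet> y | x y. x \<in> X \<and> y \<in> X \<and> x \<noteq> y} \<subseteq> (\<lambda>(x, y). x \<bullet> y) ` (X \<times> X)"
      by force
    show "finite ((\<lambda>(x, y). x \<bullet> y) ` (X \<times> X))" using fin by simp
  qed
  have np: "nonpos_pw X"
    unfolding nonpos_pw_def
  proof (intro ballI impI)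
    fix x y assume "x \<in> X" "y \<in> X" "x \<noteq> y"
    then have "x \<bullet> y \<in> {x \<bullet> y | x y. x \<in> X \<and> y \<in> X \<and> x \<noteq> y}" by blast
    then have "x \<bullet> y \<le> Max {x \<bullet> y | x y. x \<in> X \<and> y \<in> X \<and> x \<noteq> y}"
      by (rule Max_ge[OF finM])
    then show "x \<bullet> y \<le> 0" using assms(7) by simp
  qed
  obtain P :: "nat \<Rightarrow> (real ^ 'n) set" and l where
      P0: "P 0 \<subseteq> X" and Pne: "\<forall>i\<in>{1..l}. P i \<noteq> {} \<and> P i \<subseteq> X"
      and Pdisj: "\<forall>i\<in>{1..l}. \<forall>j\<in>{1..l}. i \<noteq> j \<longrightarrow> P i \<inter> P j = {}"
      and Pun: "(\<Union>i\<in>{1..l}. P i) = X - P 0" and Pind: "independent (P 0)"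
      and Pcard: "\<forall>i\<in>{1..l}. card (P i) = dim (span (P i)) + 1"
      and Porth: "\<forall>i\<in>{0..l}. \<forall>j\<in>{0..l}. i \<noteq> j \<longrightarrow> (\<forall>u\<in>span (P i). \<forall>v\<in>span (P j). u \<bullet> v = 0)"
      and Pc: "card X = dim X + l"
    using L2[OF fin np] by (elim exE conjE) (rule that; assumption)
  have "dim X \<le> CARD('n)" by (rule dim_subset_UNIV_cart)
  then have lk: "l \<ge> k" using Pc assms(5) by linarith
  have c0: "card (P 0) = dim (span (P 0))"
    using dim_eq_card_independent[OF Pind] by simp
  show ?thesis
    apply (rule exI[of _ P], rule exI[of _ l])
    using lk P0 Pne Pdisj Pun c0 Pcard Porth by blast
qed

end
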